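(* Let $U$ be a finite set of users, $R$ a finite set of resources, $w_c$ a user-independent weighted constraint, and $A_1,A_2\subseteq U\times R$ two authorization relations such that $\mathrm{usr}_{A_1}(T)=\mathrm{usr}_{A_2}(T)$ for all $T\subseteq R$. Then $w_c(A_1)=w_c(A_2)$.
   Context: A weighted constraint is a function $w_c:2^{U\times R}\to\mathbb{N}$. It is user-independent if $w_c(\sigma(A))=w_c(A)$ for every $A\subseteq U\times R$ and every permutation $\sigma$ of $U$, where $\sigma(A)=\{(\sigma(u),r):(u,r)\in A\}$. For $A\subseteq U\times R$ and $u\in U$, $A(u)=\{r:(u,r)\in A\}$. The user profile of $A$ is $\mathrm{usr}_A:2^R\to\mathbb{N}$, $\mathrm{usr}_A(T)=|\{u\in U:A(u)=T\}|$. *)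

theory Defs
  imports Main "HOL-Combinatorics.Permutations"
begin

definition auth_of :: "('u \<times> 'r) set \<Rightarrow> 'u \<Rightarrow> 'r set" where
  "auth_of A u = {r. (u, r) \<in> A}"

definition perm_rel :: "('u \<Rightarrow> 'u) \<Rightarrow> ('u \<times> 'r) set \<Rightarrow> ('u \<times> 'r) set" where
  "perm_rel \<sigma> A = {(\<sigma> u, r) | u r. (u, r) \<in> A}"

definition user_independent :: "'u set \<Rightarrow> 'r set \<Rightarrow> (('u \<times> 'r) set \<Rightarrow> nat) \<Rightarrow> bool" where
  "user_independent U R w \<longleftrightarrow>
     (\<forall>A \<sigma>. A \<subseteq> U \<times> R \<longrightarrow> \<sigma> permutes U \<longrightarrow> w (perm_rel \<sigma> A) = w A)"

definition usr :: "'u set \<Rightarrow> ('u \<times> 'r) set \<Rightarrow> 'r set \<Rightarrow> nat" where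
  "usr U A T = card {u \<in> U. auth_of A u = T}"

end

theory Submission
  imports Defs
begin

theorem lemma4p8:
  fixes U :: "'u set" and R :: "'r set" and w :: "('u \<times> 'r) set \<Rightarrow> nat"
    and A1 A2 :: "('u \<times> 'r) set"
  assumes "finite U" and "finite R"
    and "user_independent U R w"
    and "A1 \<subseteq> U \<times> R" and "A2 \<subseteq> U \<times> R"
    and "\<forall>T. T \<subseteq> R \<longrightarrow> usr U A1 T = usr U A2 T"
  shows "w A1 = w A2"
proof -
  define C1 where "C1 T = {u \<in> U. auth_of A1 u = T}" for T
  define C2 where "C2 T = {u \<in> U. auth_of A2 u = T}" for T
  have sub1: "auth_of A1 u \<subseteq> R" for u using assms(4) by (auto simp: auth_of_def)
  have sub2: "auth_of A2 u \<subseteq> R" for u using assms(5) by (auto simp: auth_of_def)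
  have "\<forall>T. \<exists>f. bij_betw f (C1 T) (C2 T)"
  proof
    fix T
    show "\<exists>f. bij_betw f (C1 T) (C2 T)"
    proof (cases "T \<subseteq> R")
      case True
      then have "card (C1 T) = card (C2 T)" using assms(6) by (simp add: usr_def C1_def C2_def)
      then show ?thesis using assms(1) by (intro finite_same_card_bij) (auto simp: C1_def C2_def)
    next
      case False
      then have "C1 T = {}" "C2 T = {}" using sub1 sub2 by (auto simp: C1_def C2_def)
      then show ?thesis by auto
    qed
  qed
  then obtain f where f: "\<And>T. bij_betw (f T) (C1 T) (C2 T)" by metis
  define \<sigma> where "\<sigma> u = (if u \<in> U then f (auth_of A1 u) u else u)" for u
  have mem: "u \<in> U \<Longrightarrow> \<sigma> u \<in> C2 (auth_of A1 u)" for u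
    using f[of "auth_of A1 u"] by (auto simp: \<sigma>_def C1_def bij_betw_def)
  have key: "u \<in> U \<Longrightarrow> \<sigma> u \<in> U \<and> auth_of A2 (\<sigma> u) = auth_of A1 u" for u
    using mem[of u] by (auto simp: C2_def)
  have inj: "inj_on \<sigma> U"
  proof (rule inj_onI)
    fix u v assume uv: "u \<in> U" "v \<in> U" "\<sigma> u = \<sigma> v"
    then have eq: "auth_of A1 u = auth_of A1 v" using key by metis
    have "u \<in> C1 (auth_of A1 u)" "v \<in> C1 (auth_of A1 u)" using uv eq by (auto simp: C1_def)
    moreover have "f (auth_of A1 u) u = f (auth_of A1 u) v" using uv eq by (simp add: \<sigma>_def)
    ultimately show "u = v" using f[of "auth_of A1 u"] by (auto simp: bij_betw_def inj_on_def)
  qed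
  have img: "\<sigma> ` U = U" using endo_inj_surj[OF assms(1) _ inj] key by blast
  have perm: "\<sigma> permutes U"
    by (rule bij_imp_permutes) (simp_all only: bij_betw_def inj img, simp add: \<sigma>_def)
  have "perm_rel \<sigma> A1 = A2"
  proof (rule set_eqI)
    fix x :: "'u \<times> 'r"
    obtain v r where x: "x = (v, r)" by (cases x)
    show "x \<in> perm_rel \<sigma> A1 \<longleftrightarrow> x \<in> A2"
    proof
      assume "x \<in> perm_rel \<sigma> A1"
      then obtain u where u: "(u, r) \<in> A1" "v = \<sigma> u" by (auto simp: perm_rel_def x)
      then have "u \<in> U" using assms(4) by auto
      then have "r \<in> auth_of A2 v" using key[of u] u by (auto simp: auth_of_def)
      then show "x \<in> A2" by (simp add: auth_of_def x)
    next
      assume "x \<in> A2"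
      then have v: "v \<in> U" "r \<in> auth_of A2 v" using assms(5) by (auto simp: x auth_of_def)
      then obtain u where u: "u \<in> U" "v = \<sigma> u" using img by blast
      then have "(u, r) \<in> A1" using key[of u] v by (auto simp: auth_of_def)
      then show "x \<in> perm_rel \<sigma> A1" using u by (auto simp: perm_rel_def x)
    qed
  qed
  then show ?thesis using assms(3,4) perm unfolding user_independent_def by metis
qed

end
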